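(* Let $n\ge 1$ and let $X_1,\dots,X_n$ be positive random variables that are jointly continuously distributed, such that each $X_k$ has an absolutely continuous distribution function $F_k$. Let $s>0$ and let $t=t(n,s)>0$ be the unique solution of $$\sum_{k=1}^n \int_0^{t} x\, dF_k(x) = s.$$ Let $N(n,s)$ and $S_{A(n,s)}$ be as defined in the context, and let $p_n=P(N(n,s)<n)$. Then $$\mathrm E(N(n,s)) \le p_n\left(\sum_{k=1}^n F_k(t) - \frac{s-\mathrm E(S_{A(n,s)})}{t}\right) + n(1-p_n).$$
   Context: Define a total order on $\{X_1,\dots,X_n\}$ by $X_i\prec X_j$ if either $X_i<X_j$, or $X_i=X_j$ and $i<j$. Let $\pi$ be the unique permutation of $\{1,\dots,n\}$ with $X_{\pi(1)}\prec X_{\pi(2)}\prec\cdots\prec X_{\pi(n)}$. Let $A(n,s)=\{\pi(1),\dots,\pi(k)\}$ where $k$ is the largest integer in $\{0,1,\dots,n\}$ with $X_{\pi(1)}+\cdots+X_{\pi(k)}\le s$ (so $A(n,s)=\emptyset$ if $X_{\pi(1)}>s$). Then $N(n,s)=|A(n,s)|$ is the maximum number of observations among $X_1,\dots,X_n$ whose sum does not exceed $s$, and $S_{A(n,s)}=\sum_{i\in A(n,s)} X_i$ (note $S_{A(n,s)}\le s$). *)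

theory Defs
  imports "HOL-Probability.Probability"
begin

definition prec :: "(nat \<Rightarrow> real) \<Rightarrow> nat \<Rightarrow> nat \<Rightarrow> bool" where
  "prec x i j \<longleftrightarrow> x i < x j \<or> (x i = x j \<and> i < j)"

definition sort_perm :: "(nat \<Rightarrow> real) \<Rightarrow> nat \<Rightarrow> nat \<Rightarrow> nat" where
  "sort_perm x n = (THE \<pi>. \<pi> permutes {1..n} \<and>
      (\<forall>i\<in>{1..n}. \<forall>j\<in>{1..n}. i < j \<longrightarrow> prec x (\<pi> i) (\<pi> j)))"

definition kmax :: "(nat \<Rightarrow> real) \<Rightarrow> nat \<Rightarrow> real \<Rightarrow> nat" where
  "kmax x n s = (GREATEST k. k \<le> n \<and> (\<Sum>i=1..k. x (sort_perm x n i)) \<le> s)"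

definition Aset :: "(nat \<Rightarrow> real) \<Rightarrow> nat \<Rightarrow> real \<Rightarrow> nat set" where
  "Aset x n s = sort_perm x n ` {1..kmax x n s}"

definition Ncount :: "(nat \<Rightarrow> real) \<Rightarrow> nat \<Rightarrow> real \<Rightarrow> nat" where
  "Ncount x n s = card (Aset x n s)"

definition SA :: "(nat \<Rightarrow> real) \<Rightarrow> nat \<Rightarrow> real \<Rightarrow> real" where
  "SA x n s = (\<Sum>i\<in>Aset x n s. x i)"

definition abs_cont_fun :: "(real \<Rightarrow> real) \<Rightarrow> bool" where
  "abs_cont_fun F \<longleftrightarrow> (\<forall>\<epsilon>>0. \<exists>\<delta>>0. \<forall>m (a::nat \<Rightarrow> real) b.
      (\<forall>i<m. a i \<le> b i) \<and>
      (\<forall>i<m. \<forall>j<m. i \<noteq> j \<longrightarrow> {a i<..<b i} \<inter> {a j<..<b j} = {}) \<and>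
      (\<Sum>i<m. b i - a i) < \<delta> \<longrightarrow> (\<Sum>i<m. \<bar>F (b i) - F (a i)\<bar>) < \<epsilon>)"

end

theory Submission
  imports Defs
begin


lemma prec_irrefl: "\<not> prec x i i" by (auto simp: prec_def)
lemma prec_asym: "prec x i j \<Longrightarrow> \<not> prec x j i" by (auto simp: prec_def)
lemma prec_trans: "prec x i j \<Longrightarrow> prec x j k \<Longrightarrow> prec x i k" by (auto simp: prec_def)
lemma prec_total: "i \<noteq> j \<Longrightarrow> prec x i j \<or> prec x j i" by (auto simp: prec_def)
lemma prec_le: "prec x i j \<Longrightarrow> x i \<le> x j" by (auto simp: prec_def)

definition rk :: "(nat \<Rightarrow> real) \<Rightarrow> nat \<Rightarrow> nat \<Rightarrow> nat" where
  "rk x n i = card {j\<in>{1..n}. prec x j i}"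

lemma rk_less:
  assumes "prec x a b" "a \<in> {1..n}"
  shows "rk x n a < rk x n b"
proof -
  have "{j\<in>{1..n}. prec x j a} \<subset> {j\<in>{1..n}. prec x j b}"
    using assms prec_trans[of x _ a b] prec_irrefl[of x a] by blast
  then show ?thesis unfolding rk_def by (intro psubset_card_mono) auto
qed

lemma rk_bound: assumes "a \<in> {1..n}" shows "rk x n a < n"
proof -
  have "{j\<in>{1..n}. prec x j a} \<subseteq> {1..n} - {a}" using prec_irrefl[of x a] by auto
  then have "rk x n a \<le> card ({1..n} - {a})" unfolding rk_def by (intro card_mono) auto
  also have "\<dots> = n - 1" using assms by simp
  finally show ?thesis using assms by auto
qed

lemma rk_inj: "inj_on (rk x n) {1..n}"
proof (rule inj_onI)
  fix a b assume ab: "a \<in> {1..n}" "b \<in> {1..n}" "rk x n a = rk x n b"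
  show "a = b"
  proof (rule ccontr)
    assume "a \<noteq> b"
    then have "prec x a b \<or> prec x b a" by (rule prec_total)
    then show False using rk_less[of x a b n] rk_less[of x b a n] ab by auto
  qed
qed

definition sorted_perm :: "(nat \<Rightarrow> real) \<Rightarrow> nat \<Rightarrow> (nat \<Rightarrow> nat) \<Rightarrow> bool" where
  "sorted_perm x n \<pi> \<longleftrightarrow> \<pi> permutes {1..n} \<and>
      (\<forall>i\<in>{1..n}. \<forall>j\<in>{1..n}. i < j \<longrightarrow> prec x (\<pi> i) (\<pi> j))"

lemma rk_sorted:
  assumes "sorted_perm x n \<pi>" "i \<in> {1..n}"
  shows "rk x n (\<pi> i) = i - 1"
proof -
  have p: "\<pi> permutes {1..n}" and inc: "\<forall>i\<in>{1..n}. \<forall>j\<in>{1..n}. i < j \<longrightarrow> prec x (\<pi> i) (\<pi> j)"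
    using assms unfolding sorted_perm_def by auto
  have "{j\<in>{1..n}. prec x j (\<pi> i)} = \<pi> ` {1..<i}"
  proof
    show "\<pi> ` {1..<i} \<subseteq> {j\<in>{1..n}. prec x j (\<pi> i)}"
    proof
      fix j assume "j \<in> \<pi> ` {1..<i}"
      then obtain l where l: "l \<in> {1..<i}" "j = \<pi> l" by auto
      then have "l \<in> {1..n}" using assms(2) by auto
      then show "j \<in> {j\<in>{1..n}. prec x j (\<pi> i)}"
        using l inc assms(2) permutes_in_image[OF p] by auto
    qed
  next
    show "{j\<in>{1..n}. prec x j (\<pi> i)} \<subseteq> \<pi> ` {1..<i}"
    proof
      fix j assume j: "j \<in> {j\<in>{1..n}. prec x j (\<pi> i)}"
      define l where "l = inv \<pi> j"
      have jl: "j = \<pi> l" unfolding l_def using permutes_inverses(1)[OF p] by simp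
      have l1: "l \<in> {1..n}" unfolding l_def using j permutes_in_image[OF permutes_inv[OF p]] by auto
      have "l < i"
      proof (rule ccontr)
        assume "\<not> l < i"
        then have "l = i \<or> i < l" by auto
        then show False using j jl inc l1 assms(2) prec_irrefl prec_asym by blast
      qed
      then show "j \<in> \<pi> ` {1..<i}" using jl l1 by auto
    qed
  qed
  moreover have "card (\<pi> ` {1..<i}) = i - 1"
    using permutes_inj[OF p] by (simp add: card_image inj_on_def)
  ultimately show ?thesis unfolding rk_def by simp
qed

lemma sorted_exists: "\<exists>\<pi>. sorted_perm x n \<pi>"
proof -
  define r where "r = (\<lambda>i. rk x n i + 1)"
  have inj: "inj_on r {1..n}"
  proof (rule inj_onI)
    fix a b assume ab: "a \<in> {1..n}" "b \<in> {1..n}" "r a = r b"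
    then have "rk x n a = rk x n b" by (simp add: r_def)
    then show "a = b" using inj_onD[OF rk_inj[of x n]] ab(1,2) by blast
  qed
  have sub: "r ` {1..n} \<subseteq> {1..n}"
  proof
    fix y assume "y \<in> r ` {1..n}"
    then obtain i where i: "i \<in> {1..n}" "y = r i" by blast
    have "rk x n i < n" using rk_bound[OF i(1)] .
    then show "y \<in> {1..n}" using i(2) unfolding r_def by simp
  qed
  have im: "r ` {1..n} = {1..n}" using endo_inj_surj[OF _ sub inj] by simp
  have bij: "bij_betw r {1..n} {1..n}" using inj im by (simp add: bij_betw_def)
  define \<pi> where "\<pi> = (\<lambda>i. if i \<in> {1..n} then inv_into {1..n} r i else i)"
  have bi: "bij_betw (inv_into {1..n} r) {1..n} {1..n}" using bij_betw_inv_into[OF bij] .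
  have "bij_betw \<pi> {1..n} {1..n} \<longleftrightarrow> bij_betw (inv_into {1..n} r) {1..n} {1..n}"
    by (rule bij_betw_cong) (simp add: \<pi>_def)
  then have bij2: "bij_betw \<pi> {1..n} {1..n}" using bi by simp
  have p: "\<pi> permutes {1..n}" by (rule bij_imp_permutes[OF bij2]) (auto simp: \<pi>_def)
  have rp: "r (\<pi> i) = i" if "i \<in> {1..n}" for i
  proof -
    have "\<pi> i = inv_into {1..n} r i" using that by (simp add: \<pi>_def)
    then show ?thesis using f_inv_into_f[of i r "{1..n}"] that im by simp
  qed
  have "prec x (\<pi> i) (\<pi> j)" if ij: "i \<in> {1..n}" "j \<in> {1..n}" "i < j" for i j
  proof -
    have pi: "\<pi> i \<in> {1..n}" "\<pi> j \<in> {1..n}" using ij permutes_in_image[OF p] by auto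
    have "\<pi> i \<noteq> \<pi> j" using rp[OF ij(1)] rp[OF ij(2)] ij(3) by auto
    then have "prec x (\<pi> i) (\<pi> j) \<or> prec x (\<pi> j) (\<pi> i)" by (rule prec_total)
    moreover have "\<not> prec x (\<pi> j) (\<pi> i)"
    proof
      assume "prec x (\<pi> j) (\<pi> i)"
      then have "rk x n (\<pi> j) < rk x n (\<pi> i)" using rk_less pi(2) by blast
      then have "r (\<pi> j) < r (\<pi> i)" unfolding r_def by simp
      then show False using rp[OF ij(1)] rp[OF ij(2)] ij(3) by simp
    qed
    ultimately show ?thesis by blast
  qed
  then have "sorted_perm x n \<pi>" using p unfolding sorted_perm_def by blast
  then show ?thesis by blast
qed

lemma sorted_unique:
  assumes "sorted_perm x n \<pi>1" "sorted_perm x n \<pi>2" shows "\<pi>1 = \<pi>2"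
proof
  fix i
  have p1: "\<pi>1 permutes {1..n}" and p2: "\<pi>2 permutes {1..n}" using assms unfolding sorted_perm_def by auto
  show "\<pi>1 i = \<pi>2 i"
  proof (cases "i \<in> {1..n}")
    case True
    have "rk x n (\<pi>1 i) = rk x n (\<pi>2 i)" using rk_sorted[OF assms(1) True] rk_sorted[OF assms(2) True] by simp
    moreover have "\<pi>1 i \<in> {1..n}" "\<pi>2 i \<in> {1..n}" using True permutes_in_image[OF p1] permutes_in_image[OF p2] by auto
    ultimately show ?thesis using inj_onD[OF rk_inj[of x n]] by blast
  next
    case False
    then show ?thesis using p1 p2 by (simp add: permutes_not_in)
  qed
qed

lemma sort_perm_sorted: "sorted_perm x n (sort_perm x n)"
proof -
  have "\<exists>!\<pi>. sorted_perm x n \<pi>" using sorted_exists sorted_unique by blast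
  then show ?thesis unfolding sort_perm_def sorted_perm_def[symmetric] by (rule theI')
qed

lemma prec_set_sorted:
  assumes sp: "sorted_perm x n \<pi>" and i: "i \<in> {1..n}"
  shows "{j\<in>{1..n}. prec x j (\<pi> i) \<or> j = \<pi> i} = \<pi> ` {1..i}"
proof -
  have p: "\<pi> permutes {1..n}" using sp unfolding sorted_perm_def by simp
  have incR: "prec x (\<pi> a) (\<pi> b)" if "a \<in> {1..n}" "b \<in> {1..n}" "a < b" for a b
    using sp that unfolding sorted_perm_def by simp
  show ?thesis
  proof
    show "\<pi> ` {1..i} \<subseteq> {j\<in>{1..n}. prec x j (\<pi> i) \<or> j = \<pi> i}"
    proof
      fix j assume "j \<in> \<pi> ` {1..i}"
      then obtain l where l: "l \<in> {1..i}" "j = \<pi> l" by auto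
      have l1: "l \<in> {1..n}" using l(1) i by simp
      have jn: "j \<in> {1..n}" using permutes_in_image[OF p, of l] l1 l(2) by simp
      have "prec x j (\<pi> i) \<or> j = \<pi> i"
      proof (cases "l = i")
        case True then show ?thesis using l(2) by simp
      next
        case False
        then have "l < i" using l(1) by simp
        then show ?thesis using incR[OF l1 i] l(2) by simp
      qed
      then show "j \<in> {j\<in>{1..n}. prec x j (\<pi> i) \<or> j = \<pi> i}" using jn by simp
    qed
  next
    show "{j\<in>{1..n}. prec x j (\<pi> i) \<or> j = \<pi> i} \<subseteq> \<pi> ` {1..i}"
    proof
      fix j assume j: "j \<in> {j\<in>{1..n}. prec x j (\<pi> i) \<or> j = \<pi> i}"
      then have jn: "j \<in> {1..n}" and jp: "prec x j (\<pi> i) \<or> j = \<pi> i" by simp_all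
      define l where "l = inv \<pi> j"
      have jl: "j = \<pi> l" unfolding l_def using permutes_inverses(1)[OF p] by simp
      have l1: "l \<in> {1..n}" unfolding l_def using jn permutes_in_image[OF permutes_inv[OF p]] by simp
      have "\<not> i < l"
      proof
        assume "i < l"
        then have pr: "prec x (\<pi> i) j" using incR[OF i l1] jl by simp
        show False
        proof (cases "j = \<pi> i")
          case True then show False using pr prec_irrefl by metis
        next
          case False then have "prec x j (\<pi> i)" using jp by simp
          then show False using pr prec_asym by metis
        qed
      qed
      then have "l \<in> {1..i}" using l1 by simp
      then show "j \<in> \<pi> ` {1..i}" using jl by blast
    qed
  qed
qed

definition Bs :: "(nat \<Rightarrow> real) \<Rightarrow> nat \<Rightarrow> nat \<Rightarrow> real" where
  "Bs x n i = (\<Sum>j\<in>{j\<in>{1..n}. prec x j i \<or> j = i}. x j)"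

lemma kmax_props:
  assumes "0 \<le> s"
  shows "kmax x n s \<le> n" "(\<Sum>i=1..kmax x n s. x (sort_perm x n i)) \<le> s"
    "\<And>m. m \<le> n \<Longrightarrow> (\<Sum>i=1..m. x (sort_perm x n i)) \<le> s \<Longrightarrow> m \<le> kmax x n s"
proof -
  let ?P = "\<lambda>k. k \<le> n \<and> (\<Sum>i=1..k. x (sort_perm x n i)) \<le> s"
  have P0: "?P 0" using assms by simp
  have b: "\<forall>y. ?P y \<longrightarrow> y \<le> n" by auto
  have "?P (kmax x n s)" unfolding kmax_def using GreatestI_nat[of ?P 0 n] P0 b by blast
  then show "kmax x n s \<le> n" "(\<Sum>i=1..kmax x n s. x (sort_perm x n i)) \<le> s" by auto
  show "\<And>m. m \<le> n \<Longrightarrow> (\<Sum>i=1..m. x (sort_perm x n i)) \<le> s \<Longrightarrow> m \<le> kmax x n s"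
    unfolding kmax_def using Greatest_le_nat[of ?P _ n] b by blast
qed

lemma Aset_char:
  assumes nn: "\<forall>j\<in>{1..n}. 0 \<le> x j" and s: "0 \<le> s"
  shows "Aset x n s = {i\<in>{1..n}. Bs x n i \<le> s}"
proof -
  define \<pi> where "\<pi> = sort_perm x n"
  define k where "k = kmax x n s"
  have sp: "sorted_perm x n \<pi>" unfolding \<pi>_def by (rule sort_perm_sorted)
  have p: "\<pi> permutes {1..n}" using sp unfolding sorted_perm_def by auto
  have inj: "inj \<pi>" using permutes_inj[OF p] .
  have kn: "k \<le> n" and ks: "(\<Sum>i=1..k. x (\<pi> i)) \<le> s"
    and kmx: "\<And>m. m \<le> n \<Longrightarrow> (\<Sum>i=1..m. x (\<pi> i)) \<le> s \<Longrightarrow> m \<le> k"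
    using kmax_props[OF s, where x=x and n=n] unfolding k_def \<pi>_def by auto
  have A: "Aset x n s = \<pi> ` {1..k}" unfolding Aset_def \<pi>_def k_def by simp
  have Bsum: "Bs x n (\<pi> a) = (\<Sum>l=1..a. x (\<pi> l))" if "a \<in> {1..n}" for a
  proof -
    have "Bs x n (\<pi> a) = sum x (\<pi> ` {1..a})" unfolding Bs_def prec_set_sorted[OF sp that] ..
    also have "\<dots> = (\<Sum>l=1..a. x (\<pi> l))" using inj by (simp add: sum.reindex inj_on_def inj_def)
    finally show ?thesis .
  qed
  have key: "\<pi> a \<in> Aset x n s \<longleftrightarrow> Bs x n (\<pi> a) \<le> s" if a: "a \<in> {1..n}" for a
  proof
    assume "\<pi> a \<in> Aset x n s"
    then have "a \<in> {1..k}" using A inj_image_mem_iff[OF inj] by simp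
    then have "(\<Sum>l=1..a. x (\<pi> l)) \<le> (\<Sum>l=1..k. x (\<pi> l))"
      using nn permutes_in_image[OF p] kn by (intro sum_mono2) auto
    then show "Bs x n (\<pi> a) \<le> s" using Bsum[OF a] ks by simp
  next
    assume "Bs x n (\<pi> a) \<le> s"
    then have "a \<le> k" using kmx[of a] a Bsum[OF a] by auto
    then show "\<pi> a \<in> Aset x n s" using A a by auto
  qed
  have sub: "Aset x n s \<subseteq> {1..n}" using A kn permutes_in_image[OF p] by auto
  have surj: "\<exists>a\<in>{1..n}. i = \<pi> a" if "i \<in> {1..n}" for i
    using that permutes_image[OF p] by (metis imageE)
  show ?thesis
  proof (intro set_eqI iffI)
    fix i assume "i \<in> Aset x n s"
    then show "i \<in> {i\<in>{1..n}. Bs x n i \<le> s}" using sub surj key by blast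
  next
    fix i assume "i \<in> {i\<in>{1..n}. Bs x n i \<le> s}"
    then show "i \<in> Aset x n s" using surj key by blast
  qed
qed

lemma card_filter_sum: "finite I \<Longrightarrow> real (card {i\<in>I. P i}) = (\<Sum>i\<in>I. if P i then 1 else 0)"
  using sum.inter_filter[of I "\<lambda>_. 1::real" P] by simp

lemma pointwise:
  fixes x :: "nat \<Rightarrow> real"
  assumes nn: "\<forall>j\<in>{1..n}. 0 \<le> x j" and s: "0 \<le> s" and t: "t > 0"
  shows "t * real (Ncount x n s) \<le> t * (\<Sum>k=1..n. indicator {..t} (x k))
           + SA x n s - (\<Sum>k=1..n. indicator {..t} (x k) * x k)"
proof -
  define A where "A = Aset x n s"
  define L where "L = {k\<in>{1..n}. x k \<le> t}"
  have Adef: "A = {i\<in>{1..n}. Bs x n i \<le> s}" unfolding A_def using Aset_char[OF nn s] .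
  have finA: "finite A" and finL: "finite L" and AS: "A \<subseteq> {1..n}" and LS: "L \<subseteq> {1..n}"
    unfolding Adef L_def by auto
  have C: "(\<Sum>k=1..n. indicator {..t} (x k)) = real (card L)"
  proof -
    have e2: "real (card L) = (\<Sum>k\<in>{1..n}. if x k \<le> t then 1 else 0)"
      unfolding L_def by (rule card_filter_sum) simp
    have e1: "(\<Sum>k=1..n. indicator {..t} (x k)) = (\<Sum>k\<in>{1..n}. if x k \<le> t then 1 else (0::real))"
      by (rule sum.cong) (auto simp: indicator_def)
    from e1 e2 show ?thesis by linarith
  qed
  have T: "(\<Sum>k=1..n. indicator {..t} (x k) * x k) = sum x L"
  proof -
    have "(\<Sum>k=1..n. indicator {..t} (x k) * x k) = (\<Sum>k\<in>{1..n}. if x k \<le> t then x k else 0)"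
      by (rule sum.cong) (auto simp: indicator_def)
    also have "\<dots> = sum x L" unfolding L_def using sum.inter_filter[of "{1..n}" x "\<lambda>k. x k \<le> t"] by simp
    finally show ?thesis .
  qed
  have down: "j \<in> A" if i: "i \<in> A" and j: "j \<in> {1..n}" and lt: "x j < x i" for i j
  proof -
    have pr: "prec x j i" using lt by (simp add: prec_def)
    have "{l\<in>{1..n}. prec x l j \<or> l = j} \<subseteq> {l\<in>{1..n}. prec x l i \<or> l = i}"
      using pr prec_trans[of x _ j i] by blast
    then have "Bs x n j \<le> Bs x n i" unfolding Bs_def using nn by (intro sum_mono2) auto
    then show ?thesis using i j unfolding Adef by auto
  qed
  show ?thesis
  proof (cases "L \<subseteq> A")
    case True
    have c: "card A = card L + card (A - L)"
      using card_Diff_subset[OF finL True] card_mono[OF finA True] by simp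
    have sm: "sum x A = sum x L + sum x (A - L)"
      using sum.subset_diff[OF True finA, of x] by simp
    have "(\<Sum>k\<in>A - L. t) \<le> sum x (A - L)"
      using AS unfolding L_def by (intro sum_mono) auto
    then have "t * real (card (A - L)) \<le> sum x (A - L)" by (simp add: mult.commute)
    then show ?thesis unfolding C T Ncount_def SA_def A_def[symmetric] using c sm
      by (simp add: algebra_simps)
  next
    case False
    then obtain j where j: "j \<in> L" "j \<notin> A" by auto
    have AL: "A \<subseteq> L"
    proof
      fix i assume i: "i \<in> A"
      have "x i \<le> x j" using down[OF i, of j] j LS by force
      then show "i \<in> L" using j i AS unfolding L_def by auto
    qed
    have c: "card L = card A + card (L - A)"
      using card_Diff_subset[OF finA AL] card_mono[OF finL AL] by simp
    have sm: "sum x L = sum x A + sum x (L - A)"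
      using sum.subset_diff[OF AL finL, of x] by simp
    have "sum x (L - A) \<le> (\<Sum>k\<in>L - A. t)"
      unfolding L_def by (intro sum_mono) auto
    then have "sum x (L - A) \<le> t * real (card (L - A))" by (simp add: mult.commute)
    then show ?thesis unfolding C T Ncount_def SA_def A_def[symmetric] using c sm
      by (simp add: algebra_simps)
  qed
qed

lemma Ncount_le: assumes "\<forall>j\<in>{1..n}. 0 \<le> x j" "0 \<le> s" shows "Ncount x n s \<le> n"
proof -
  have "Ncount x n s \<le> card {1..n}" unfolding Ncount_def Aset_char[OF assms]
    by (intro card_mono) auto
  then show ?thesis by simp
qed

lemma Ncount_sum: assumes "\<forall>j\<in>{1..n}. 0 \<le> x j" "0 \<le> s"
  shows "real (Ncount x n s) = (\<Sum>i\<in>{1..n}. if Bs x n i \<le> s then 1 else 0)"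
  unfolding Ncount_def Aset_char[OF assms] by (rule card_filter_sum) simp

lemma SA_sum: assumes "\<forall>j\<in>{1..n}. 0 \<le> x j" "0 \<le> s"
  shows "SA x n s = (\<Sum>i\<in>{1..n}. if Bs x n i \<le> s then x i else 0)"
  unfolding SA_def Aset_char[OF assms] by (rule sum.inter_filter) simp

lemma SA_le: assumes "0 \<le> s" shows "SA x n s \<le> s"
proof -
  have p: "sort_perm x n permutes {1..n}" using sort_perm_sorted[of x n] unfolding sorted_perm_def by simp
  have inj: "inj_on (sort_perm x n) {1..kmax x n s}" by (rule permutes_inj_on[OF p])
  have "SA x n s = sum x (sort_perm x n ` {1..kmax x n s})" unfolding SA_def Aset_def ..
  also have "\<dots> = sum (x \<circ> sort_perm x n) {1..kmax x n s}" by (rule sum.reindex[OF inj])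
  also have "\<dots> = (\<Sum>i=1..kmax x n s. x (sort_perm x n i))" by simp
  finally show ?thesis using kmax_props(2)[OF assms, of x n] by simp
qed

lemma SA_ge: assumes "\<forall>j\<in>{1..n}. 0 \<le> x j" "0 \<le> s" shows "0 \<le> SA x n s"
  unfolding SA_def Aset_char[OF assms] using assms(1) by (intro sum_nonneg) auto



theorem mainTheorem2:
  fixes M :: "'a measure" and n :: nat and X :: "nat \<Rightarrow> 'a \<Rightarrow> real" and s t :: real
  assumes "prob_space M"
    and "n \<ge> 1"
    and rv: "\<And>k. k \<in> {1..n} \<Longrightarrow> X k \<in> borel_measurable M"
    and pos: "\<And>k \<omega>. k \<in> {1..n} \<Longrightarrow> \<omega> \<in> space M \<Longrightarrow> X k \<omega> > 0"
    and joint: "absolutely_continuous (PiM {1..n} (\<lambda>_. lborel))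
                  (distr M (PiM {1..n} (\<lambda>_. lborel)) (\<lambda>\<omega>. \<lambda>k\<in>{1..n}. X k \<omega>))"
    and marg: "\<And>k. k \<in> {1..n} \<Longrightarrow> abs_cont_fun (cdf (distr M borel (X k)))"
    and "s > 0"
    and "t > 0"
    and t_sol: "(\<Sum>k=1..n. integral\<^sup>L (distr M borel (X k)) (\<lambda>x. indicator {0..t} x * x)) = s"
    and t_uniq: "\<And>u. u > 0 \<Longrightarrow>
        (\<Sum>k=1..n. integral\<^sup>L (distr M borel (X k)) (\<lambda>x. indicator {0..u} x * x)) = s \<Longrightarrow> u = t"
  shows "(let p = measure M {\<omega> \<in> space M. Ncount (\<lambda>k. X k \<omega>) n s < n} in
          (\<integral>\<omega>. real (Ncount (\<lambda>k. X k \<omega>) n s) \<partial>M)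
            \<le> p * ((\<Sum>k=1..n. cdf (distr M borel (X k)) t)
                    - (s - (\<integral>\<omega>. SA (\<lambda>k. X k \<omega>) n s \<partial>M)) / t)
              + real n * (1 - p))"
proof -
  interpret prob_space M by fact
  have s0: "0 \<le> s" using \<open>s > 0\<close> by simp
  have t0: "t > 0" by fact
  have nn: "\<forall>j\<in>{1..n}. 0 \<le> X j \<omega>" if "\<omega> \<in> space M" for \<omega>
    using pos that by (auto intro: less_imp_le)
  define fN where "fN = (\<lambda>\<omega>. \<Sum>i\<in>{1..n}. if Bs (\<lambda>k. X k \<omega>) n i \<le> s then 1 else (0::real))"
  define fS where "fS = (\<lambda>\<omega>. \<Sum>i\<in>{1..n}. if Bs (\<lambda>k. X k \<omega>) n i \<le> s then X i \<omega> else 0)"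
  define C where "C = (\<lambda>\<omega>. \<Sum>k=1..n. indicator {..t} (X k \<omega>) :: real)"
  define T where "T = (\<lambda>\<omega>. \<Sum>k=1..n. indicator {..t} (X k \<omega>) * X k \<omega> :: real)"
  have mB: "(\<lambda>\<omega>. Bs (\<lambda>k. X k \<omega>) n i) \<in> borel_measurable M" if i: "i \<in> {1..n}" for i
  proof -
    have eq: "Bs (\<lambda>k. X k \<omega>) n i = (\<Sum>j\<in>{1..n}. if (X j \<omega> < X i \<omega> \<or> (X j \<omega> = X i \<omega> \<and> j < i)) \<or> j = i then X j \<omega> else 0)" for \<omega>
      unfolding Bs_def prec_def
      by (rule sum.inter_filter[of "{1..n}" "\<lambda>j. X j \<omega>" "\<lambda>j. (X j \<omega> < X i \<omega> \<or> (X j \<omega> = X i \<omega> \<and> j < i)) \<or> j = i"]) simp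
    have "(\<lambda>\<omega>. if (X j \<omega> < X i \<omega> \<or> (X j \<omega> = X i \<omega> \<and> j < i)) \<or> j = i then X j \<omega> else 0) \<in> borel_measurable M"
      if j: "j \<in> {1..n}" for j
    proof -
      note [measurable] = rv[OF i] rv[OF j]
      show ?thesis by measurable
    qed
    then show ?thesis unfolding eq by (intro borel_measurable_sum)
  qed
  have mN: "fN \<in> borel_measurable M" unfolding fN_def
  proof (intro borel_measurable_sum)
    fix i assume i: "i \<in> {1..n}"
    note [measurable] = mB[OF i]
    show "(\<lambda>\<omega>. if Bs (\<lambda>k. X k \<omega>) n i \<le> s then 1 else (0::real)) \<in> borel_measurable M" by measurable
  qed
  have mS: "fS \<in> borel_measurable M" unfolding fS_def
  proof (intro borel_measurable_sum)
    fix i assume i: "i \<in> {1..n}"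
    note [measurable] = mB[OF i] rv[OF i]
    show "(\<lambda>\<omega>. if Bs (\<lambda>k. X k \<omega>) n i \<le> s then X i \<omega> else 0) \<in> borel_measurable M" by measurable
  qed
  have Neq: "real (Ncount (\<lambda>k. X k \<omega>) n s) = fN \<omega>" if "\<omega> \<in> space M" for \<omega>
    unfolding fN_def using Ncount_sum[OF nn[OF that] s0] by simp
  have Seq: "SA (\<lambda>k. X k \<omega>) n s = fS \<omega>" if "\<omega> \<in> space M" for \<omega>
    unfolding fS_def using SA_sum[OF nn[OF that] s0] by simp
  have iN: "integrable M fN"
    by (rule integrable_const_bound[where B="real n"])
       (auto simp: Neq[symmetric] intro!: AE_I2 Ncount_le[OF nn s0] mN)
  have iS: "integrable M fS"
    using SA_le[OF s0] SA_ge[OF nn s0]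
    by (intro integrable_const_bound[where B="s"])
       (auto simp: Seq[symmetric] intro!: AE_I2 mS)
  have iCk: "integrable M (\<lambda>\<omega>. indicator {..t} (X k \<omega>) :: real)" if k: "k \<in> {1..n}" for k
  proof -
    note [measurable] = rv[OF k]
    show ?thesis by (rule integrable_const_bound[where B=1]) (auto simp: indicator_def)
  qed
  have iTk: "integrable M (\<lambda>\<omega>. indicator {..t} (X k \<omega>) * X k \<omega> :: real)" if k: "k \<in> {1..n}" for k
  proof -
    note [measurable] = rv[OF k]
    show ?thesis
      using t0 by (intro integrable_const_bound[where B=t])
         (auto simp: indicator_def intro!: AE_I2 dest: pos[OF k] intro: less_imp_le)
  qed
  have iC: "integrable M C" unfolding C_def by (rule Bochner_Integration.integrable_sum) (rule iCk)
  have iT: "integrable M T" unfolding T_def by (rule Bochner_Integration.integrable_sum) (rule iTk)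
  have ptw: "t * fN \<omega> \<le> t * C \<omega> + fS \<omega> - T \<omega>" if "\<omega> \<in> space M" for \<omega>
    using pointwise[OF nn[OF that] s0 t0] Neq[OF that] Seq[OF that] unfolding C_def T_def by simp
  have "(\<integral>\<omega>. t * fN \<omega> \<partial>M) \<le> (\<integral>\<omega>. t * C \<omega> + fS \<omega> - T \<omega> \<partial>M)"
    using iN iC iS iT ptw by (intro integral_mono) auto
  also have "\<dots> = t * integral\<^sup>L M C + integral\<^sup>L M fS - integral\<^sup>L M T"
    using iC iS iT by simp
  finally have main: "t * integral\<^sup>L M fN \<le> t * integral\<^sup>L M C + integral\<^sup>L M fS - integral\<^sup>L M T"
    by simp
  have EC: "integral\<^sup>L M C = (\<Sum>k=1..n. cdf (distr M borel (X k)) t)"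
    unfolding C_def
  proof (subst Bochner_Integration.integral_sum)
    show "\<And>k. k \<in> {1..n} \<Longrightarrow> integrable M (\<lambda>\<omega>. indicator {..t} (X k \<omega>) :: real)" by (rule iCk)
    show "(\<Sum>k=1..n. \<integral>\<omega>. indicator {..t} (X k \<omega>) \<partial>M) = (\<Sum>k=1..n. cdf (distr M borel (X k)) t)"
    proof (rule sum.cong)
      fix k assume k: "k \<in> {1..n}"
      note [measurable] = rv[OF k]
      have "cdf (distr M borel (X k)) t = integral\<^sup>L (distr M borel (X k)) (indicator {..t})"
        by (simp add: cdf_def)
      also have "\<dots> = (\<integral>\<omega>. indicator {..t} (X k \<omega>) \<partial>M)"
        by (rule integral_distr) auto
      finally show "(\<integral>\<omega>. indicator {..t} (X k \<omega>) \<partial>M) = cdf (distr M borel (X k)) t" by simp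
    qed simp
  qed
  have ET: "integral\<^sup>L M T = s"
    unfolding T_def
  proof (subst Bochner_Integration.integral_sum)
    show "\<And>k. k \<in> {1..n} \<Longrightarrow> integrable M (\<lambda>\<omega>. indicator {..t} (X k \<omega>) * X k \<omega> :: real)" by (rule iTk)
    show "(\<Sum>k=1..n. \<integral>\<omega>. indicator {..t} (X k \<omega>) * X k \<omega> \<partial>M) = s"
      unfolding t_sol[symmetric]
    proof (rule sum.cong)
      fix k assume k: "k \<in> {1..n}"
      note [measurable] = rv[OF k]
      have "integral\<^sup>L (distr M borel (X k)) (\<lambda>x. indicator {0..t} x * x)
          = (\<integral>\<omega>. indicator {0..t} (X k \<omega>) * X k \<omega> \<partial>M)"
        by (rule integral_distr) auto
      also have "\<dots> = (\<integral>\<omega>. indicator {..t} (X k \<omega>) * X k \<omega> \<partial>M)"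
        using pos[OF k] by (intro Bochner_Integration.integral_cong) (auto simp: indicator_def less_imp_le)
      finally show "(\<integral>\<omega>. indicator {..t} (X k \<omega>) * X k \<omega> \<partial>M) =
          integral\<^sup>L (distr M borel (X k)) (\<lambda>x. indicator {0..t} x * x)" by simp
    qed simp
  qed
  have EN: "(\<integral>\<omega>. real (Ncount (\<lambda>k. X k \<omega>) n s) \<partial>M) = integral\<^sup>L M fN"
    using Neq by (intro Bochner_Integration.integral_cong) auto
  have ES: "(\<integral>\<omega>. SA (\<lambda>k. X k \<omega>) n s \<partial>M) = integral\<^sup>L M fS"
    using Seq by (intro Bochner_Integration.integral_cong) auto
  define B where "B = (\<Sum>k=1..n. cdf (distr M borel (X k)) t) - (s - integral\<^sup>L M fS) / t"
  have b1: "integral\<^sup>L M fN \<le> B"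
  proof -
    have tB: "t * B = t * (\<Sum>k=1..n. cdf (distr M borel (X k)) t) - (s - integral\<^sup>L M fS)"
      unfolding B_def using t0 by (simp add: right_diff_distrib diff_divide_distrib)
    have "t * integral\<^sup>L M fN \<le> t * B" using main tB unfolding EC ET by linarith
    then show ?thesis using t0 by simp
  qed
  have b2: "integral\<^sup>L M fN \<le> real n"
    using iN by (rule integral_le_const)
       (auto simp: Neq[symmetric] intro!: AE_I2 Ncount_le[OF nn s0])
  define p where "p = measure M {\<omega> \<in> space M. Ncount (\<lambda>k. X k \<omega>) n s < n}"
  have p0: "0 \<le> p" "p \<le> 1" unfolding p_def by auto
  have "integral\<^sup>L M fN = p * integral\<^sup>L M fN + (1 - p) * integral\<^sup>L M fN" by (simp add: algebra_simps)
  also have "\<dots> \<le> p * B + (1 - p) * real n"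
    using p0 b1 b2 by (intro add_mono mult_left_mono) auto
  finally show ?thesis unfolding Let_def p_def[symmetric] EN ES B_def[symmetric]
    by (simp add: algebra_simps)
qed

end
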